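(* Let $\mu$ be a probability measure on $\mathrm{Homeo}_+(\mathbb{R})$ with finite or countable support. If there exists $\varepsilon>0$ such that $\phi_+(x)\ge\varepsilon$ for all $x\in\mathbb{R}$, then $\phi_+\equiv 1$. Symmetrically, if there exists $\varepsilon>0$ such that $\phi_-(x)\ge\varepsilon$ for all $x\in\mathbb{R}$, then $\phi_-\equiv1$.
   Context: Setup. Let $\mu$ be a probability measure on the group $\mathrm{Homeo}_+(\mathbb{R})$ of orientation-preserving homeomorphisms of $\mathbb{R}$, supported on a finite or countable set $\{f_1,f_2,\dots\}$ with $p_i=\mu(\{f_i\})>0$, $\sum_i p_i=1$. Let $g_1,g_2,\dots$ be i.i.d. random maps with law $\mu$, and set $F_0=\mathrm{id}$, $F_n=g_n\circ\cdots\circ g_1$. For $x\in\mathbb{R}$ let $\phi_+(x)=\mathbb{P}(\lim_n F_n(x)=+\infty)$ and $\phi_-(x)=\mathbb{P}(\lim_n F_n(x)=-\infty)$. *)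

theory Defs
  imports "HOL-Probability.Probability"
begin

text \<open>The measure mu on Homeo_+(R) with countable support {f_1, f_2, ...} is encoded by
  an index distribution p :: nat pmf (weights p_i) and a labelling f :: nat => real => real;
  the law of one random map is map_pmf f p.  The i.i.d. sequence g_1, g_2, ... is the
  stream of indices distributed according to the product measure.\<close>

definition homeo_plus :: "(real \<Rightarrow> real) \<Rightarrow> bool" where
  "homeo_plus h \<longleftrightarrow> (\<exists>g. homeomorphism UNIV UNIV h g) \<and> strict_mono h"

text \<open>walk f w n = F_n = g_n o ... o g_1, where g_(k+1) = f (w !! k).\<close>
primrec walk :: "(nat \<Rightarrow> real \<Rightarrow> real) \<Rightarrow> nat stream \<Rightarrow> nat \<Rightarrow> real \<Rightarrow> real" where
  "walk f w 0 = id"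
| "walk f w (Suc n) = f (w !! n) \<circ> walk f w n"

definition iid_space :: "nat pmf \<Rightarrow> nat stream measure" where
  "iid_space p = stream_space (measure_pmf p)"

definition phi_plus :: "nat pmf \<Rightarrow> (nat \<Rightarrow> real \<Rightarrow> real) \<Rightarrow> real \<Rightarrow> real" where
  "phi_plus p f x = measure (iid_space p)
     {w \<in> space (iid_space p). filterlim (\<lambda>n. walk f w n x) at_top sequentially}"

definition phi_minus :: "nat pmf \<Rightarrow> (nat \<Rightarrow> real \<Rightarrow> real) \<Rightarrow> real \<Rightarrow> real" where
  "phi_minus p f x = measure (iid_space p)
     {w \<in> space (iid_space p). filterlim (\<lambda>n. walk f w n x) at_bot sequentially}"

end

theory Submission imports Defs begin

lemma space_iid[simp]: "space (iid_space p) = UNIV"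
  by (simp add: iid_space_def space_stream_space)

lemma sets_iid: "sets (iid_space p) = sets (stream_space (count_space UNIV))"
  unfolding iid_space_def by (rule sets_stream_space_cong) (simp add: sets_measure_pmf_count_space)

lemma prob_iid: "prob_space (iid_space p)"
  unfolding iid_space_def by (rule prob_space.prob_space_stream_space[OF prob_space_measure_pmf])

lemma lev_sets: "{w. stake n w \<in> L} \<in> sets (iid_space p)"
proof -
  have "stake n -` L \<inter> space (stream_space (count_space UNIV)) \<in> sets (stream_space (count_space UNIV))"
    by (rule measurable_sets[OF measurable_stake]) simp
  then show ?thesis by (simp add: sets_iid space_stream_space vimage_def)
qed

lemma walk_Cons: "walk f (t ## w) (Suc n) x = walk f w n (f t x)"
  by (induction n) auto

definition Aset where "Aset p f F x = {w \<in> space (iid_space p). filterlim (\<lambda>n. walk f w n x) F sequentially}"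

lemma Aset_Cons: "(t ## w \<in> Aset p f F x) = (w \<in> Aset p f F (f t x))"
proof -
  have "filterlim (\<lambda>n. walk f (t ## w) n x) F sequentially = filterlim (\<lambda>n. walk f (t ## w) (Suc n) x) F sequentially"
    by (rule filterlim_sequentially_Suc[symmetric])
  also have "\<dots> = filterlim (\<lambda>n. walk f w n (f t x)) F sequentially"
    by (simp only: walk_Cons)
  finally show ?thesis by (simp add: Aset_def del: walk.simps)
qed

lemma markov:
  assumes meas: "\<And>y. Aset p f F y \<in> sets (iid_space p)"
    and bound: "\<And>y. ennreal e \<le> emeasure (iid_space p) (Aset p f F y)"
  shows "ennreal e * emeasure (iid_space p) {w. stake n w \<in> L} \<le> emeasure (iid_space p) (Aset p f F x \<inter> {w. stake n w \<in> L})"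
proof (induction n arbitrary: x L)
  case 0
  interpret S: prob_space "iid_space p" by (rule prob_iid)
  show ?case
  proof (cases "[] \<in> L")
    case True
    then have "{w. stake 0 w \<in> L} = space (iid_space p)" by auto
    then show ?thesis using bound[of x] S.emeasure_space_1 by (simp add: Aset_def)
  next
    case False
    then show ?thesis by simp
  qed
next
  case (Suc n)
  let ?M = "measure_pmf p"
  let ?S = "stream_space ?M"
  have S: "iid_space p = ?S" by (simp add: iid_space_def)
  define Lt where "Lt t = {l. t # l \<in> L}" for t
  have C: "{w. stake (Suc n) w \<in> L} \<in> sets ?S" using lev_sets[of "Suc n" L p] by (simp add: S)
  have AC: "Aset p f F x \<inter> {w. stake (Suc n) w \<in> L} \<in> sets ?S" using meas[of x] C by (simp add: S)
  have e1: "emeasure ?S (Aset p f F x \<inter> {w. stake (Suc n) w \<in> L}) =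
     (\<integral>\<^sup>+t. emeasure ?S {w \<in> space ?S. t ## w \<in> Aset p f F x \<inter> {w. stake (Suc n) w \<in> L}} \<partial>?M)"
    by (rule prob_space.emeasure_stream_space[OF prob_space_measure_pmf AC])
  have e2: "emeasure ?S {w. stake (Suc n) w \<in> L} =
     (\<integral>\<^sup>+t. emeasure ?S {w \<in> space ?S. t ## w \<in> {w. stake (Suc n) w \<in> L}} \<partial>?M)"
    by (rule prob_space.emeasure_stream_space[OF prob_space_measure_pmf C])
  have s1: "{w \<in> space ?S. t ## w \<in> Aset p f F x \<inter> {w. stake (Suc n) w \<in> L}} = Aset p f F (f t x) \<inter> {w. stake n w \<in> Lt t}" for t
    using Aset_Cons[of t _ p f F x] by (auto simp: Lt_def space_stream_space)
  have s2: "{w \<in> space ?S. t ## w \<in> {w. stake (Suc n) w \<in> L}} = {w. stake n w \<in> Lt t}" for t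
    by (auto simp: Lt_def space_stream_space)
  have "ennreal e * emeasure ?S {w. stake (Suc n) w \<in> L} = (\<integral>\<^sup>+t. ennreal e * emeasure ?S {w. stake n w \<in> Lt t} \<partial>?M)"
    unfolding e2 s2 by (rule nn_integral_cmult[symmetric]) simp
  also have "\<dots> \<le> (\<integral>\<^sup>+t. emeasure ?S (Aset p f F (f t x) \<inter> {w. stake n w \<in> Lt t}) \<partial>?M)"
    by (rule nn_integral_mono) (use Suc.IH in \<open>simp add: S\<close>)
  also have "\<dots> = emeasure ?S (Aset p f F x \<inter> {w. stake (Suc n) w \<in> L})"
    unfolding e1 s1 ..
  finally show ?case by (simp add: S)
qed


definition lev :: "nat stream set set" where "lev = {C. \<exists>n L. C = {w. stake n w \<in> L}}"

lemma lev_compl: "C \<in> lev \<Longrightarrow> UNIV - C \<in> lev"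
proof -
  assume "C \<in> lev"
  then obtain n L where "C = {w. stake n w \<in> L}" by (auto simp: lev_def)
  then have "UNIV - C = {w. stake n w \<in> -L}" by auto
  then show ?thesis unfolding lev_def by blast
qed

lemma lev_raise: "n \<le> m \<Longrightarrow> {w. stake n w \<in> L} = {w. stake m w \<in> {l. take n l \<in> L}}"
  by (auto simp: take_stake min_absorb1)

lemma lev_Un: "C1 \<in> lev \<Longrightarrow> C2 \<in> lev \<Longrightarrow> C1 \<union> C2 \<in> lev"
proof -
  assume "C1 \<in> lev" "C2 \<in> lev"
  then obtain n1 L1 n2 L2 where c: "C1 = {w. stake n1 w \<in> L1}" "C2 = {w. stake n2 w \<in> L2}"
    by (auto simp: lev_def)
  let ?m = "max n1 n2"
  have t: "take n1 (stake ?m w) = stake n1 w" "take n2 (stake ?m w) = stake n2 w" for w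
    by (simp_all add: take_stake)
  have "C1 \<union> C2 = {w. stake ?m w \<in> {l. take n1 l \<in> L1} \<union> {l. take n2 l \<in> L2}}"
    unfolding c by (auto simp: t)
  then show ?thesis unfolding lev_def by blast
qed

lemma lev_sets': "C \<in> lev \<Longrightarrow> C \<in> sets (iid_space p)"
  using lev_sets by (auto simp: lev_def)

definition approx where
  "approx p B \<longleftrightarrow> (\<forall>\<delta>>0. \<exists>C\<in>lev. measure (iid_space p) ((B - C) \<union> (C - B)) < \<delta>)"

lemma approx_lev: "C \<in> lev \<Longrightarrow> approx p C"
  unfolding approx_def by (intro allI impI bexI[of _ C]) auto

lemma approx_compl: "approx p B \<Longrightarrow> approx p (UNIV - B)"
  unfolding approx_def
proof (intro allI impI)
  fix d :: real assume "\<forall>\<delta>>0. \<exists>C\<in>lev. measure (iid_space p) (B - C \<union> (C - B)) < \<delta>" "d > 0"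
  then obtain C where "C \<in> lev" "measure (iid_space p) (B - C \<union> (C - B)) < d" by auto
  moreover have "(UNIV - B) - (UNIV - C) \<union> ((UNIV - C) - (UNIV - B)) = B - C \<union> (C - B)" by auto
  ultimately show "\<exists>C\<in>lev. measure (iid_space p) ((UNIV - B) - C \<union> (C - (UNIV - B))) < d"
    using lev_compl by metis
qed

lemma approx_Un:
  assumes B: "B1 \<in> sets (iid_space p)" "B2 \<in> sets (iid_space p)" and a: "approx p B1" "approx p B2"
  shows "approx p (B1 \<union> B2)"
  unfolding approx_def
proof (intro allI impI)
  interpret S: prob_space "iid_space p" by (rule prob_iid)
  fix d :: real assume "d > 0"
  then obtain C1 C2 where c: "C1 \<in> lev" "measure (iid_space p) (B1 - C1 \<union> (C1 - B1)) < d/2"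
    "C2 \<in> lev" "measure (iid_space p) (B2 - C2 \<union> (C2 - B2)) < d/2"
    using a unfolding approx_def by (meson half_gt_zero)
  have m: "B1 - C1 \<union> (C1 - B1) \<in> sets (iid_space p)" "B2 - C2 \<union> (C2 - B2) \<in> sets (iid_space p)"
    using B c lev_sets'[of _ p] by auto
  have "measure (iid_space p) ((B1 \<union> B2) - (C1 \<union> C2) \<union> ((C1 \<union> C2) - (B1 \<union> B2)))
     \<le> measure (iid_space p) ((B1 - C1 \<union> (C1 - B1)) \<union> (B2 - C2 \<union> (C2 - B2)))"
    by (rule S.finite_measure_mono) (use m in auto)
  also have "\<dots> \<le> measure (iid_space p) (B1 - C1 \<union> (C1 - B1)) + measure (iid_space p) (B2 - C2 \<union> (C2 - B2))"
    by (rule measure_subadditive) (use m in auto)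
  finally show "\<exists>C\<in>lev. measure (iid_space p) (B1 \<union> B2 - C \<union> (C - (B1 \<union> B2))) < d"
    using c lev_Un by (intro bexI[of _ "C1 \<union> C2"]) auto
qed

lemma approx_finUN:
  fixes B :: "nat \<Rightarrow> nat stream set"
  assumes "\<And>i. B i \<in> sets (iid_space p)" "\<And>i. approx p (B i)"
  shows "approx p (\<Union>i<N. B i)"
proof (induction N)
  case 0
  have "{} \<in> lev" unfolding lev_def by (intro CollectI exI[of _ 0] exI[of _ "{}"]) auto
  then show ?case using approx_lev by simp
next
  case (Suc N)
  have "(\<Union>i<Suc N. B i) = (\<Union>i<N. B i) \<union> B N" by (auto simp: lessThan_Suc)
  moreover have "(\<Union>i<N. B i) \<in> sets (iid_space p)" using assms by auto
  ultimately show ?case using approx_Un assms Suc by metis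
qed

lemma approx_close:
  assumes B: "B \<in> sets (iid_space p)" "B' \<in> sets (iid_space p)" "approx p B'"
    and d: "measure (iid_space p) (B - B' \<union> (B' - B)) < d/2"
  shows "\<exists>C\<in>lev. measure (iid_space p) (B - C \<union> (C - B)) < d"
proof -
  interpret S: prob_space "iid_space p" by (rule prob_iid)
  have "d > 0" using d measure_nonneg[of "iid_space p" "B - B' \<union> (B' - B)"] by linarith
  then obtain C where c: "C \<in> lev" "measure (iid_space p) (B' - C \<union> (C - B')) < d/2"
    using B unfolding approx_def by (meson half_gt_zero)
  have m: "B' - C \<union> (C - B') \<in> sets (iid_space p)" "B - B' \<union> (B' - B) \<in> sets (iid_space p)"
    using B c lev_sets'[of _ p] by auto
  have "measure (iid_space p) (B - C \<union> (C - B))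
     \<le> measure (iid_space p) ((B - B' \<union> (B' - B)) \<union> (B' - C \<union> (C - B')))"
    by (rule S.finite_measure_mono) (use m in auto)
  also have "\<dots> \<le> measure (iid_space p) (B - B' \<union> (B' - B)) + measure (iid_space p) (B' - C \<union> (C - B'))"
    by (rule measure_subadditive) (use m in auto)
  finally show ?thesis using c d by (intro bexI[of _ C]) auto
qed

lemma approx_UN:
  fixes B :: "nat \<Rightarrow> nat stream set"
  assumes B: "\<And>i. B i \<in> sets (iid_space p)" "\<And>i. approx p (B i)"
  shows "approx p (\<Union>i. B i)"
  unfolding approx_def
proof (intro allI impI)
  interpret S: prob_space "iid_space p" by (rule prob_iid)
  fix d :: real assume "d > 0"
  let ?A = "\<lambda>n. \<Union>i<n. B i"
  have "(\<lambda>n. measure (iid_space p) (?A n)) \<longlonglongrightarrow> measure (iid_space p) (\<Union>n. ?A n)"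
  proof (rule S.finite_Lim_measure_incseq)
    show "incseq ?A" unfolding incseq_def by (meson UN_mono lessThan_subset_iff order_refl)
  qed (use B in auto)
  moreover have "(\<Union>n. ?A n) = (\<Union>i. B i)" by auto
  ultimately have "(\<lambda>n. measure (iid_space p) (?A n)) \<longlonglongrightarrow> measure (iid_space p) (\<Union>i. B i)" by simp
  then obtain N where N: "dist (measure (iid_space p) (?A N)) (measure (iid_space p) (\<Union>i. B i)) < d/2"
    using \<open>d > 0\<close> by (meson half_gt_zero lim_sequentially order_refl)
  have sub: "?A N \<subseteq> (\<Union>i. B i)" by auto
  have mU: "(\<Union>i. B i) \<in> sets (iid_space p)" "?A N \<in> sets (iid_space p)" using B by auto
  have "measure (iid_space p) ((\<Union>i. B i) - ?A N \<union> (?A N - (\<Union>i. B i)))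
      = measure (iid_space p) ((\<Union>i. B i) - ?A N)" using sub by (metis Diff_eq_empty_iff sup_bot.right_neutral)
  also have "\<dots> = measure (iid_space p) (\<Union>i. B i) - measure (iid_space p) (?A N)"
    by (rule S.finite_measure_Diff) (use mU sub in auto)
  also have "\<dots> < d/2" using N unfolding dist_real_def by (smt (verit))
  finally show "\<exists>C\<in>lev. measure (iid_space p) ((\<Union>i. B i) - C \<union> (C - (\<Union>i. B i))) < d"
    by (rule approx_close[OF mU(1) mU(2) approx_finUN[OF B]])
qed

lemma lev_empty: "{} \<in> lev"
  unfolding lev_def by (intro CollectI exI[of _ 0] exI[of _ "{}"]) auto

lemma sstart_lev: "sstart UNIV l \<in> lev"
proof -
  have "sstart UNIV l = {w. stake (length l) w \<in> {l}}"
    by (auto simp: sstart_eq list_eq_iff_nth_eq)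
  then show ?thesis unfolding lev_def by blast
qed

lemma approx_all: "B \<in> sets (iid_space p) \<Longrightarrow> approx p B"
proof -
  assume "B \<in> sets (iid_space p)"
  have "sets (sigma (streams UNIV) (sstart UNIV ` lists UNIV \<union> {{}})) = sigma_sets (streams UNIV) (sstart UNIV ` lists UNIV \<union> {{}})"
    by (rule sets_measure_of) simp
  then have SS: "sets (iid_space p) = sigma_sets (streams UNIV) (sstart UNIV ` lists UNIV \<union> {{}})"
    by (simp only: sets_iid sets_stream_space_sstart[OF countableI_type])
  with \<open>B \<in> sets (iid_space p)\<close> have Bs: "B \<in> sigma_sets (streams UNIV) (sstart UNIV ` lists UNIV \<union> {{}})"
    by blast
  have closed: "sstart UNIV ` lists UNIV \<union> {{}} \<subseteq> Pow (streams UNIV)" by simp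
  from Int_stable_sstart[of UNIV] closed Bs show ?thesis
  proof (induction rule: sigma_sets_induct_disjoint)
    case (basic A)
    then consider "A = {}" | l where "A = sstart UNIV l" by blast
    then show ?case
    proof cases
      case 1 then show ?thesis using approx_lev[OF lev_empty] by simp
    next
      case 2 then show ?thesis using approx_lev[OF sstart_lev] by simp
    qed
  next
    case empty
    show ?case by (rule approx_lev[OF lev_empty])
  next
    case (compl A)
    then show ?case using approx_compl by simp
  next
    case (union A)
    have "\<And>i. A i \<in> sets (iid_space p)" using union(2) SS by blast
    then show ?case using approx_UN union by blast
  qed
qed


lemma main_F:
  assumes "\<exists>\<epsilon>>0. \<forall>x. measure (iid_space p) (Aset p f F x) \<ge> \<epsilon>"
  shows "\<forall>x. measure (iid_space p) (Aset p f F x) = 1"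
proof
  interpret S: prob_space "iid_space p" by (rule prob_iid)
  obtain e where e: "e > 0" "\<And>x. e \<le> measure (iid_space p) (Aset p f F x)" using assms by auto
  have meas: "Aset p f F y \<in> sets (iid_space p)" for y
  proof (rule ccontr)
    assume "Aset p f F y \<notin> sets (iid_space p)"
    then have "measure (iid_space p) (Aset p f F y) = 0" by (rule measure_notin_sets)
    with e(1) e(2)[of y] show False by simp
  qed
  have bound: "ennreal e \<le> emeasure (iid_space p) (Aset p f F y)" for y
    using e(2)[of y] by (simp add: S.emeasure_eq_measure)
  fix x
  let ?A = "Aset p f F x"
  let ?m = "measure (iid_space p)"
  have key: "1 - ?m ?A \<le> d / e + d" if d: "d > 0" for d
  proof -
    obtain C where C: "C \<in> lev" "?m (?A - C \<union> (C - ?A)) < d"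
      using approx_all[OF meas[of x]] d unfolding approx_def by blast
    then obtain n L where CL: "C = {w. stake n w \<in> L}" unfolding lev_def by blast
    define C' where "C' = {w. stake n w \<in> -L}"
    have mC': "C' \<in> sets (iid_space p)" "C \<in> sets (iid_space p)" unfolding C'_def CL by (rule lev_sets)+
    have "ennreal e * emeasure (iid_space p) C' \<le> emeasure (iid_space p) (?A \<inter> C')"
      unfolding C'_def by (rule markov[OF meas bound])
    then have "ennreal (e * ?m C') \<le> ennreal (?m (?A \<inter> C'))"
      using e(1) by (simp add: S.emeasure_eq_measure ennreal_mult)
    then have m1: "e * ?m C' \<le> ?m (?A \<inter> C')" by (simp add: ennreal_le_iff)
    have "?m (?A \<inter> C') \<le> ?m (?A - C \<union> (C - ?A))"
      by (rule S.finite_measure_mono) (use mC' meas[of x] in \<open>auto simp: C'_def CL\<close>)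
    with m1 C have m2: "e * ?m C' \<le> d" by linarith
    have "?m (UNIV - ?A) \<le> ?m (C' \<union> (C - ?A))"
      by (rule S.finite_measure_mono) (use mC' meas[of x] in \<open>auto simp: C'_def CL\<close>)
    also have "\<dots> \<le> ?m C' + ?m (C - ?A)"
      by (rule measure_subadditive) (use mC' meas[of x] in auto)
    also have "?m (C - ?A) \<le> ?m (?A - C \<union> (C - ?A))"
      by (rule S.finite_measure_mono) (use mC' meas[of x] in auto)
    finally have m3: "?m (UNIV - ?A) \<le> ?m C' + d" using C by linarith
    have "?m (UNIV - ?A) = 1 - ?m ?A" using S.prob_compl[OF meas[of x]] by simp
    moreover have "?m C' \<le> d / e" using m2 e(1) by (simp add: field_simps mult.commute)
    ultimately show ?thesis using m3 by linarith
  qed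
  have "1 \<le> ?m ?A"
  proof (rule field_le_epsilon)
    fix t :: real assume t: "t > 0"
    define d where "d = t * e / (1 + e)"
    have "d > 0" using t e(1) by (simp add: d_def)
    moreover have "d / e + d = t"
    proof -
      have h1: "e + e*e \<noteq> 0" using e(1) by (smt (verit) mult_pos_pos)
      have h2: "e * t + e * (e * t) = t * (e + e*e)" by (simp add: algebra_simps)
      have "(e * t + e * (e * t)) / (e + e * e) = t" using h1 h2 by simp
      then show ?thesis using e(1) by (simp add: d_def field_simps)
    qed
    ultimately show "1 \<le> ?m ?A + t" using key[of d] by linarith
  qed
  then show "?m ?A = 1" using S.prob_le_1[of ?A] by linarith
qed

lemma phi_plus_eq: "phi_plus p f x = measure (iid_space p) (Aset p f at_top x)"
  by (simp add: phi_plus_def Aset_def)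

lemma phi_minus_eq: "phi_minus p f x = measure (iid_space p) (Aset p f at_bot x)"
  by (simp add: phi_minus_def Aset_def)

theorem proposition1:
  fixes p :: "nat pmf" and f :: "nat \<Rightarrow> real \<Rightarrow> real"
  assumes "\<And>i. i \<in> set_pmf p \<Longrightarrow> homeo_plus (f i)"
  shows "((\<exists>\<epsilon>>0. \<forall>x. phi_plus p f x \<ge> \<epsilon>) \<longrightarrow> (\<forall>x. phi_plus p f x = 1))
       \<and> ((\<exists>\<epsilon>>0. \<forall>x. phi_minus p f x \<ge> \<epsilon>) \<longrightarrow> (\<forall>x. phi_minus p f x = 1))"
  using main_F[of p f at_top] main_F[of p f at_bot] unfolding phi_plus_eq phi_minus_eq by blast

end
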